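(* Reduction Rule 2 is safe: if \((G',k')\) is obtained from an instance \((G,k)\) of Vertex Cover by applying Reduction Rule 2, then \(k'+MM(G')-2LP(G')\leq k+MM(G)-2LP(G)\).
   Context: All graphs are finite, undirected and simple. An instance of Vertex Cover is a pair \((G,k)\), \(k\in\mathbb{N}\). \(MM(G)\) is the size of a maximum matching. \(LPVC(G)\) is the LP: minimize \(\sum_v x_v\) subject to \(x_u+x_v\ge1\) for each edge \(\{u,v\}\) and \(0\le x_v\le1\); \(LP(G)\) is its optimum value. For \(X\subseteq V(G)\), \(N(X)\) is the set of vertices outside \(X\) adjacent to some vertex of \(X\); for an independent set \(Z\), \(\mathrm{surplus}(Z)=|N(Z)|-|Z|\). Reduction Rule 2 applies to \((G,k)\) when (i) the all-\(\frac12\) assignment is the unique optimum solution of \(LPVC(G)\), and (ii) there is an independent set \(Z\subseteq V(G)\) with \(\mathrm{surplus}(Z)=1\) such that \(N(Z)\) is not an independent set in \(G\); it then outputs \(G'=G[V(G)\setminus(Z\cup N(Z))]\) and \(k'=k-|N(Z)|\). *)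

theory Defs
  imports Complex_Main
begin

definition graph :: "'a set \<Rightarrow> 'a set set \<Rightarrow> bool" where
  "graph V E \<longleftrightarrow> finite V \<and> (\<forall>e\<in>E. e \<subseteq> V \<and> card e = 2)"

definition matching :: "'a set set \<Rightarrow> 'a set set \<Rightarrow> bool" where
  "matching E M \<longleftrightarrow> M \<subseteq> E \<and> (\<forall>e1\<in>M. \<forall>e2\<in>M. e1 \<noteq> e2 \<longrightarrow> e1 \<inter> e2 = {})"

definition MM :: "'a set \<Rightarrow> 'a set set \<Rightarrow> nat" where
  "MM V E = Max {card M | M. matching E M}"

definition lp_feasible :: "'a set \<Rightarrow> 'a set set \<Rightarrow> ('a \<Rightarrow> real) \<Rightarrow> bool" where
  "lp_feasible V E x \<longleftrightarrow>
     (\<forall>u v. {u, v} \<in> E \<longrightarrow> x u + x v \<ge> 1) \<and> (\<forall>v\<in>V. 0 \<le> x v \<and> x v \<le> 1)"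

definition LP :: "'a set \<Rightarrow> 'a set set \<Rightarrow> real" where
  "LP V E = (INF x \<in> {x. lp_feasible V E x}. sum x V)"

definition lp_optimal :: "'a set \<Rightarrow> 'a set set \<Rightarrow> ('a \<Rightarrow> real) \<Rightarrow> bool" where
  "lp_optimal V E x \<longleftrightarrow> lp_feasible V E x \<and> (\<forall>y. lp_feasible V E y \<longrightarrow> sum x V \<le> sum y V)"

text \<open>The all-1/2 assignment is the unique optimum solution of LPVC(G)
  (solutions are identified by their values on V).\<close>
definition half_unique_opt :: "'a set \<Rightarrow> 'a set set \<Rightarrow> bool" where
  "half_unique_opt V E \<longleftrightarrow> lp_optimal V E (\<lambda>_. 1/2) \<and>
     (\<forall>x. lp_optimal V E x \<longrightarrow> (\<forall>v\<in>V. x v = 1/2))"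

definition indep :: "'a set set \<Rightarrow> 'a set \<Rightarrow> bool" where
  "indep E X \<longleftrightarrow> (\<forall>u\<in>X. \<forall>v\<in>X. {u, v} \<notin> E)"

definition nbhd :: "'a set \<Rightarrow> 'a set set \<Rightarrow> 'a set \<Rightarrow> 'a set" where
  "nbhd V E X = {v \<in> V - X. \<exists>u\<in>X. {u, v} \<in> E}"

definition surplus :: "'a set \<Rightarrow> 'a set set \<Rightarrow> 'a set \<Rightarrow> int" where
  "surplus V E Z = int (card (nbhd V E Z)) - int (card Z)"

definition ind_edges :: "'a set set \<Rightarrow> 'a set \<Rightarrow> 'a set set" where
  "ind_edges E S = {e \<in> E. e \<subseteq> S}"

definition rule2 :: "'a set \<Rightarrow> 'a set set \<Rightarrow> int \<Rightarrow> 'a set \<Rightarrow> 'a set \<Rightarrow> 'a set set \<Rightarrow> int \<Rightarrow> bool" where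
  "rule2 V E k Z V' E' k' \<longleftrightarrow>
     half_unique_opt V E \<and> Z \<subseteq> V \<and> indep E Z \<and> surplus V E Z = 1 \<and>
     \<not> indep E (nbhd V E Z) \<and>
     V' = V - (Z \<union> nbhd V E Z) \<and> E' = ind_edges E V' \<and>
     k' = k - int (card (nbhd V E Z))"

end

theory Submission
  imports Defs
begin

lemma hall:
  fixes A :: "'a set" and N :: "'a \<Rightarrow> 'b set"
  assumes "finite A" "\<forall>a\<in>A. finite (N a)" "\<forall>S\<subseteq>A. card S \<le> card (\<Union>(N ` S))"
  shows "\<exists>f. inj_on f A \<and> (\<forall>a\<in>A. f a \<in> N a)"
  using assms
proof (induction "card A" arbitrary: A N rule: less_induct)
  case less
  show ?case
  proof (cases "A = {}")
    case True then show ?thesis by auto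
  next
    case False
    show ?thesis
    proof (cases "\<exists>S. S \<subseteq> A \<and> S \<noteq> {} \<and> S \<noteq> A \<and> card (\<Union>(N ` S)) = card S")
      case True
      then obtain S where S: "S \<subseteq> A" "S \<noteq> {}" "S \<noteq> A" "card (\<Union>(N ` S)) = card S" by blast
      have fS: "finite S" using S less(2) finite_subset by blast
      have "card S < card A" using S less(2) psubset_card_mono by blast
      moreover have "\<forall>a\<in>S. finite (N a)" using S less(3) by blast
      moreover have "\<forall>T\<subseteq>S. card T \<le> card (\<Union>(N ` T))" using S less(4) by blast
      ultimately obtain f1 where f1: "inj_on f1 S" "\<forall>a\<in>S. f1 a \<in> N a"
        using less(1)[of S N] fS by blast
      define B where "B = A - S"
      define NS where "NS = \<Union>(N ` S)"
      define N2 where "N2 = (\<lambda>a. N a - NS)"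
      have fB: "finite B" using less(2) B_def by auto
      have "B \<subset> A" unfolding B_def using S by blast
      then have "card B < card A" using less(2) psubset_card_mono by blast
      moreover have "\<forall>a\<in>B. finite (N2 a)" using less(3) B_def N2_def by auto
      moreover have "\<forall>T\<subseteq>B. card T \<le> card (\<Union>(N2 ` T))"
      proof (intro allI impI)
        fix T assume T: "T \<subseteq> B"
        have e: "\<Union>(N2 ` T) = \<Union>(N ` (T \<union> S)) - NS" by (auto simp: N2_def NS_def)
        have sub: "NS \<subseteq> \<Union>(N ` (T \<union> S))" by (auto simp: NS_def)
        have fT: "finite T" using T fB finite_subset by blast
        have TS: "T \<union> S \<subseteq> A" using T S B_def by auto
        have fU: "finite (\<Union>(N ` (T \<union> S)))" using TS less(3) fT fS by auto
        have c1: "card (\<Union>(N2 ` T)) = card (\<Union>(N ` (T \<union> S))) - card NS"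
          unfolding e using sub fU by (meson card_Diff_subset finite_subset)
        have c2: "card (T \<union> S) \<le> card (\<Union>(N ` (T \<union> S)))" using less(4) TS by blast
        have c3: "card (T \<union> S) = card T + card S"
          using T B_def fT fS by (intro card_Un_disjoint) auto
        show "card T \<le> card (\<Union>(N2 ` T))" using c1 c2 c3 S(4) NS_def by simp
      qed
      ultimately obtain f2 where f2: "inj_on f2 B" "\<forall>a\<in>B. f2 a \<in> N2 a"
        using less(1)[of B N2] fB by blast
      define f where "f = (\<lambda>a. if a \<in> S then f1 a else f2 a)"
      have "inj_on f A"
        unfolding inj_on_def
      proof (intro ballI impI)
        fix x y assume xy: "x \<in> A" "y \<in> A" "f x = f y"
        show "x = y"
        proof (cases "x \<in> S"; cases "y \<in> S")
          assume "x \<in> S" "y \<in> S" then show ?thesis using xy f1(1) unfolding f_def inj_on_def by simp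
        next
          assume "x \<in> S" "y \<notin> S"
          then have "f x \<in> NS" using f1 unfolding f_def NS_def by auto
          moreover have "f y \<notin> NS" using \<open>y \<notin> S\<close> f2(2) xy(2) unfolding f_def B_def N2_def by auto
          ultimately show ?thesis using xy by simp
        next
          assume "x \<notin> S" "y \<in> S"
          then have "f y \<in> NS" using f1 unfolding f_def NS_def by auto
          moreover have "f x \<notin> NS" using \<open>x \<notin> S\<close> f2(2) xy(1) unfolding f_def B_def N2_def by auto
          ultimately show ?thesis using xy by simp
        next
          assume "x \<notin> S" "y \<notin> S"
          then show ?thesis using xy f2(1) unfolding f_def B_def inj_on_def by simp
        qed
      qed
      moreover have "\<forall>a\<in>A. f a \<in> N a" using f1 f2 f_def B_def N2_def by auto
      ultimately show ?thesis by blast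
    next
      case False2: False
      obtain a where a: "a \<in> A" using \<open>A \<noteq> {}\<close> by auto
      have "card {a} \<le> card (N a)" using less(4)[rule_format, of "{a}"] a by simp
      then have "N a \<noteq> {}" by auto
      then obtain b where b: "b \<in> N a" by auto
      define A' where "A' = A - {a}"
      define N' where "N' = (\<lambda>x. N x - {b})"
      have fA': "finite A'" using less(2) A'_def by auto
      have "card A' < card A" unfolding A'_def using card_Diff1_less[OF less(2) a] .
      moreover have "\<forall>x\<in>A'. finite (N' x)" using less(3) A'_def N'_def by auto
      moreover have "\<forall>T\<subseteq>A'. card T \<le> card (\<Union>(N' ` T))"
      proof (intro allI impI)
        fix T assume T: "T \<subseteq> A'"
        show "card T \<le> card (\<Union>(N' ` T))"
        proof (cases "T = {}")
          case True then show ?thesis by simp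
        next
          case False
          have TA: "T \<subseteq> A" "T \<noteq> A" using T A'_def a by auto
          have "card T \<le> card (\<Union>(N ` T))" using less(4) TA by blast
          moreover have "card (\<Union>(N ` T)) \<noteq> card T"
          proof (rule notI)
            assume h: "card (\<Union>(N ` T)) = card T"
            have "\<exists>S. S \<subseteq> A \<and> S \<noteq> {} \<and> S \<noteq> A \<and> card (\<Union>(N ` S)) = card S"
              using TA False h T by (intro exI[of _ T]) simp
            then show False using False2 by simp
          qed
          ultimately have lt: "card T < card (\<Union>(N ` T))" using TA False by linarith
          have "\<Union>(N' ` T) = \<Union>(N ` T) - {b}" by (auto simp: N'_def)
          then show ?thesis using lt card_Diff_singleton_if[of "\<Union>(N ` T)" b] by auto
        qed
      qed
      ultimately obtain f' where f': "inj_on f' A'" "\<forall>x\<in>A'. f' x \<in> N' x"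
        using less(1)[of A' N'] fA' by blast
      define f where "f = f'(a := b)"
      have "inj_on f A"
        unfolding inj_on_def
      proof (intro ballI impI)
        fix x y assume xy: "x \<in> A" "y \<in> A" "f x = f y"
        show "x = y"
        proof (cases "x = a"; cases "y = a")
          assume "x \<noteq> a" "y \<noteq> a" then show ?thesis using xy f'(1) unfolding f_def A'_def inj_on_def by simp
        qed (use xy f' f_def A'_def N'_def in auto)
      qed
      moreover have "\<forall>x\<in>A. f x \<in> N x" using f' f_def A'_def N'_def b by auto
      ultimately show ?thesis by blast
    qed
  qed
qed


lemma fin_E: "graph V E \<Longrightarrow> finite E"
  unfolding graph_def by (meson PowI finite_Pow_iff finite_subset subsetI)

lemma fin_matchings: "finite E \<Longrightarrow> finite {card M |M. matching E M}"
proof -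
  assume "finite E"
  have "{M. matching E M} \<subseteq> Pow E" by (auto simp: matching_def)
  then have "finite {M. matching E M}" using \<open>finite E\<close> finite_subset by blast
  moreover have "{card M |M. matching E M} = card ` {M. matching E M}" by auto
  ultimately show ?thesis by simp
qed

lemma MM_ge: "finite E \<Longrightarrow> matching E M \<Longrightarrow> card M \<le> MM V E"
  unfolding MM_def by (rule Max_ge) (auto intro: fin_matchings)

lemma MM_ex: "finite E \<Longrightarrow> \<exists>M. matching E M \<and> card M = MM V E"
proof -
  assume fE: "finite E"
  have "matching E {}" by (simp add: matching_def)
  then have ne: "{card M |M. matching E M} \<noteq> {}" by blast
  have "MM V E \<in> {card M |M. matching E M}"
    unfolding MM_def by (rule Max_in[OF fin_matchings[OF fE] ne])
  then show ?thesis by auto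
qed

lemma surplus_pos:
  assumes G: "graph V E" and H: "half_unique_opt V E" and I: "I \<subseteq> V" "indep E I" "I \<noteq> {}"
  shows "card I < card (nbhd V E I)"
proof (rule ccontr)
  assume "\<not> card I < card (nbhd V E I)"
  then have le: "card (nbhd V E I) \<le> card I" by simp
  define NI where "NI = nbhd V E I"
  define x where "x = (\<lambda>v. if v \<in> I then 0 else if v \<in> NI then 1 else (1/2::real))"
  have fV: "finite V" using G graph_def by blast
  have NIsub: "NI \<subseteq> V - I" by (auto simp: NI_def nbhd_def)
  have feas: "lp_feasible V E x"
    unfolding lp_feasible_def
  proof (intro conjI allI impI ballI)
    fix u v assume e: "{u, v} \<in> E"
    have uvV: "u \<in> V" "v \<in> V" using G e unfolding graph_def by auto
    have nI: "\<not> (u \<in> I \<and> v \<in> I)" using I(2) e unfolding indep_def by blast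
    show "x u + x v \<ge> 1"
    proof (cases "u \<in> I")
      case True
      then have "v \<in> NI" using nI uvV e by (auto simp: NI_def nbhd_def)
      then show ?thesis using True nI by (simp add: x_def)
    next
      case False
      show ?thesis
      proof (cases "v \<in> I")
        case True
        then have "u \<in> NI" using nI uvV e by (auto simp: NI_def nbhd_def insert_commute)
        then show ?thesis using True False by (simp add: x_def)
      next
        case False2: False
        then show ?thesis using False by (simp add: x_def)
      qed
    qed
  next
    fix v show "0 \<le> x v" by (simp add: x_def)
  next
    fix v show "x v \<le> 1" by (simp add: x_def)
  qed
  have fI: "finite I" using I fV finite_subset by blast
  have fN: "finite NI" using NIsub fV finite_subset by blast
  have s1: "sum x V = sum x I + sum x (V - I)"
    using fV I(1) by (metis add.commute sum.subset_diff)
  have s2: "sum x (V - I) = sum x NI + sum x (V - I - NI)"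
    using fV NIsub by (metis add.commute finite_Diff sum.subset_diff)
  have s3: "sum x I = 0" by (simp add: x_def)
  have "sum x NI = sum (\<lambda>_. 1) NI" using NIsub by (intro sum.cong) (auto simp: x_def)
  then have s4: "sum x NI = card NI" by simp
  have "sum x (V - I - NI) = sum (\<lambda>_. 1/2) (V - I - NI)" by (intro sum.cong) (auto simp: x_def)
  then have s5: "sum x (V - I - NI) = card (V - I - NI) / 2" by simp
  have c5: "card (V - I - NI) = card V - card I - card NI"
  proof -
    have "card (V - I - NI) = card (V - I) - card NI" using NIsub fN by (simp add: card_Diff_subset)
    moreover have "card (V - I) = card V - card I" using I(1) fI by (simp add: card_Diff_subset)
    ultimately show ?thesis by simp
  qed
  have cVI: "card I + card NI \<le> card V"
  proof -
    have "card (I \<union> NI) = card I + card NI" using NIsub fI fN by (intro card_Un_disjoint) auto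
    moreover have "card (I \<union> NI) \<le> card V" using NIsub I(1) fV by (intro card_mono) auto
    ultimately show ?thesis by simp
  qed
  have eq: "sum x V = real (card NI) + (real (card V) - real (card I) - real (card NI)) / 2"
    using s1 s2 s3 s4 s5 c5 cVI by (simp add: of_nat_diff)
  have le': "real (card NI) \<le> real (card I)" using le NI_def by simp
  have "sum x V \<le> card V / 2" unfolding eq using le' by (simp add: field_simps)
  also have "\<dots> = sum (\<lambda>_. 1/2) V" by simp
  finally have sx: "sum x V \<le> sum (\<lambda>_. 1/2) V" .
  have "lp_optimal V E x"
    unfolding lp_optimal_def using feas sx H unfolding half_unique_opt_def lp_optimal_def
    by (meson order_trans)
  then have "\<forall>v\<in>V. x v = 1/2" using H unfolding half_unique_opt_def by blast
  moreover obtain a where a: "a \<in> I" using I by blast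
  ultimately have "x a = 1/2" using I(1) by blast
  then show False using a by (simp add: x_def)
qed

theorem lemma8:
  fixes V :: "'a set" and E :: "'a set set" and k :: nat and Z :: "'a set"
    and V' :: "'a set" and E' :: "'a set set" and k' :: int
  assumes "graph V E"
    and "rule2 V E (int k) Z V' E' k'"
  shows "real_of_int k' + real (MM V' E') - 2 * LP V' E'
           \<le> real k + real (MM V E) - 2 * LP V E"
proof -
  note G = assms(1)
  define NZ where "NZ = nbhd V E Z"
  have H: "half_unique_opt V E" and ZV: "Z \<subseteq> V" and iZ: "indep E Z"
    and sur: "surplus V E Z = 1" and V'd: "V' = V - (Z \<union> NZ)" and E'd: "E' = ind_edges E V'"
    and k'd: "k' = int k - int (card NZ)"
    using assms(2) unfolding rule2_def NZ_def by auto
  have fV: "finite V" using G graph_def by blast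
  have fE: "finite E" using G by (rule fin_E)
  have NZV: "NZ \<subseteq> V" "NZ \<inter> Z = {}" by (auto simp: NZ_def nbhd_def)
  have NZmem: "w \<in> NZ \<longleftrightarrow> w \<in> V - Z \<and> (\<exists>u\<in>Z. {u, w} \<in> E)" for w
    by (simp add: NZ_def nbhd_def)
  have cNZ: "card NZ = card Z + 1" using sur unfolding surplus_def NZ_def[symmetric] by linarith
  have Zne: "Z \<noteq> {}"
  proof
    assume "Z = {}"
    then have "NZ = {}" by (simp add: NZ_def nbhd_def)
    then show False using cNZ by simp
  qed
  have fZ: "finite Z" using ZV fV finite_subset by blast
  have fNZ: "finite NZ" using NZV fV finite_subset by blast
  have fV': "finite V'" using V'd fV by simp
  have cV: "card V = card V' + card Z + card NZ"
  proof -
    have "V = V' \<union> (Z \<union> NZ)" using V'd ZV NZV by auto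
    moreover have "card (V' \<union> (Z \<union> NZ)) = card V' + card (Z \<union> NZ)"
      using fV' fZ fNZ V'd by (intro card_Un_disjoint) auto
    moreover have "card (Z \<union> NZ) = card Z + card NZ" using fZ fNZ NZV by (intro card_Un_disjoint) auto
    ultimately show ?thesis by simp
  qed
  have E'E: "E' \<subseteq> E" and E'V': "\<forall>e\<in>E'. e \<subseteq> V'" using E'd by (auto simp: ind_edges_def)
  have E'mem: "{u, v} \<in> E' \<longleftrightarrow> {u, v} \<in> E \<and> u \<in> V' \<and> v \<in> V'" for u v
    using E'd by (auto simp: ind_edges_def)
  have optH: "lp_optimal V E (\<lambda>_. 1/2)" using H by (simp add: half_unique_opt_def)
  have LPG: "LP V E = card V / 2"
  proof -
    have bdd: "bdd_below ((\<lambda>x. sum x V) ` {x. lp_feasible V E x})"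
      using optH unfolding lp_optimal_def by (intro bdd_belowI2[where m = "sum (\<lambda>_. 1/2) V"]) auto
    have "LP V E \<le> sum (\<lambda>_. 1/2) V"
      unfolding LP_def using optH unfolding lp_optimal_def by (intro cINF_lower[OF bdd]) auto
    moreover have "sum (\<lambda>_. 1/2) V \<le> LP V E"
      unfolding LP_def using optH unfolding lp_optimal_def by (intro cINF_greatest) auto
    ultimately show ?thesis by simp
  qed
  have G'sur: "card I \<le> card (nbhd V' E' I)" if I: "I \<subseteq> V'" "indep E' I" for I
  proof -
    define J where "J = I \<union> Z"
    have JV: "J \<subseteq> V" using I ZV V'd J_def by auto
    have iJ: "indep E J"
      unfolding indep_def
    proof (intro ballI)
      fix u v assume uv: "u \<in> J" "v \<in> J"
      show "{u, v} \<notin> E"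
      proof
        assume e: "{u, v} \<in> E"
        consider "u \<in> I" "v \<in> I" | "u \<in> Z" "v \<in> Z" | "u \<in> I" "v \<in> Z" | "u \<in> Z" "v \<in> I"
          using uv J_def by auto
        then show False
        proof cases
          case 1 then show ?thesis using e I E'mem unfolding indep_def by blast
        next
          case 2 then show ?thesis using e iZ unfolding indep_def by blast
        next
          case 3
          then have "u \<in> NZ" using NZmem[of u] e I V'd by (auto simp: insert_commute)
          then show ?thesis using 3 I V'd by auto
        next
          case 4
          then have "v \<in> NZ" using NZmem[of v] e I V'd by auto
          then show ?thesis using 4 I V'd by auto
        qed
      qed
    qed
    have cj1: "card J < card (nbhd V E J)" using surplus_pos[OF G H JV iJ] Zne J_def by auto
    have cj2: "card J = card I + card Z"
      unfolding J_def using I fV' fZ V'd finite_subset by (intro card_Un_disjoint) auto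
    have nsub: "nbhd V E J \<subseteq> nbhd V' E' I \<union> NZ"
    proof
      fix w assume w: "w \<in> nbhd V E J"
      then obtain u where u: "u \<in> J" "{u, w} \<in> E" "w \<in> V" "w \<notin> J" by (auto simp: nbhd_def)
      show "w \<in> nbhd V' E' I \<union> NZ"
      proof (cases "u \<in> Z")
        case True then show ?thesis using NZmem[of w] u J_def by auto
      next
        case False
        then have uI: "u \<in> I" using u J_def by auto
        show ?thesis
        proof (cases "w \<in> NZ")
          case False
          then have "w \<in> V'" using u V'd J_def by auto
          then have "{u, w} \<in> E'" using E'mem u uI I by auto
          then show ?thesis using uI u \<open>w \<in> V'\<close> J_def by (auto simp: nbhd_def)
        qed simp
      qed
    qed
    have finU: "finite (nbhd V' E' I \<union> NZ)"
    proof -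
      have "nbhd V' E' I \<subseteq> V'" by (auto simp: nbhd_def)
      then show ?thesis using fV' fNZ finite_subset by blast
    qed
    have "card (nbhd V E J) \<le> card (nbhd V' E' I \<union> NZ)" using nsub finU by (simp add: card_mono)
    then have "card (nbhd V E J) \<le> card (nbhd V' E' I) + card NZ"
      using card_Un_le[of "nbhd V' E' I" NZ] by linarith
    then show ?thesis using cNZ cj1 cj2 by linarith
  qed
  have LPG': "card V' / 2 \<le> LP V' E'"
  proof -
    define Nf where "Nf = (\<lambda>v. {w \<in> V'. {v, w} \<in> E'})"
    have "\<exists>f. inj_on f V' \<and> (\<forall>a\<in>V'. f a \<in> Nf a)"
    proof (rule hall)
      show "finite V'" by (rule fV')
      show "\<forall>a\<in>V'. finite (Nf a)" using fV' by (simp add: Nf_def)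
      show "\<forall>S\<subseteq>V'. card S \<le> card (\<Union> (Nf ` S))"
      proof (intro allI impI)
        fix S assume S: "S \<subseteq> V'"
        define U where "U = \<Union> (Nf ` S)"
        define I where "I = S - U"
        have UV': "U \<subseteq> V'" by (auto simp: U_def Nf_def)
        have fU: "finite U" using UV' fV' finite_subset by blast
        have fS: "finite S" using S fV' finite_subset by blast
        have iI: "indep E' I" unfolding indep_def
          using I_def U_def Nf_def S by blast
        have sub: "nbhd V' E' I \<subseteq> U - S"
        proof
          fix w assume w: "w \<in> nbhd V' E' I"
          then obtain u where u: "u \<in> I" "{u, w} \<in> E'" "w \<in> V'" by (auto simp: nbhd_def)
          have "w \<in> U" using u I_def S by (auto simp: U_def Nf_def)
          moreover have "w \<notin> S"
          proof
            assume "w \<in> S"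
            then have "u \<in> U" using u I_def S by (auto simp: U_def Nf_def insert_commute)
            then show False using u I_def by auto
          qed
          ultimately show "w \<in> U - S" by simp
        qed
        have "card I \<le> card (nbhd V' E' I)" using G'sur[OF _ iI] I_def S by auto
        also have "\<dots> \<le> card (U - S)" using sub fU by (intro card_mono) auto
        finally have "card I \<le> card (U - S)" .
        moreover have "card S = card I + card (S \<inter> U)"
          unfolding I_def using card_Int_Diff[OF fS, of U] by simp
        moreover have "card U = card (U - S) + card (U \<inter> S)"
          using card_Int_Diff[OF fU, of S] by simp
        ultimately show "card S \<le> card (\<Union> (Nf ` S))" unfolding U_def[symmetric]
          by (simp add: Int_commute)
      qed
    qed
    then obtain f where f: "inj_on f V'" "\<forall>a\<in>V'. f a \<in> Nf a" by blast
    have fimg: "f ` V' = V'"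
    proof (rule card_subset_eq[OF fV'])
      show "f ` V' \<subseteq> V'" using f by (auto simp: Nf_def)
      show "card (f ` V') = card V'" using f by (simp add: card_image)
    qed
    have ne: "{x. lp_feasible V' E' x} \<noteq> {}"
    proof -
      have "lp_feasible V' E' (\<lambda>_. 1)" by (simp add: lp_feasible_def)
      then show ?thesis by blast
    qed
    show ?thesis unfolding LP_def
    proof (rule cINF_greatest[OF ne])
      fix y assume "y \<in> {x. lp_feasible V' E' x}"
      then have y: "lp_feasible V' E' y" by simp
      have "sum y V' = sum y (f ` V')" using fimg by simp
      also have "\<dots> = sum (y \<circ> f) V'" using f by (simp add: sum.reindex)
      finally have r: "sum y V' = sum (\<lambda>v. y (f v)) V'" by simp
      have "real (card V') = sum (\<lambda>_. 1) V'" by simp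
      also have "\<dots> \<le> sum (\<lambda>v. y v + y (f v)) V'"
      proof (rule sum_mono)
        fix v assume "v \<in> V'"
        then have "{v, f v} \<in> E'" using f by (auto simp: Nf_def)
        then show "1 \<le> y v + y (f v)" using y by (simp add: lp_feasible_def)
      qed
      also have "\<dots> = 2 * sum y V'" using r by (simp add: sum.distrib)
      finally show "real (card V') / 2 \<le> sum y V'" by simp
    qed
  qed
  have MMG: "MM V' E' + card Z \<le> MM V E"
  proof -
    obtain M' where M': "matching E' M'" "card M' = MM V' E'" using MM_ex[of E'] fE E'E finite_subset by blast
    define Nf where "Nf = (\<lambda>a. {w \<in> V. {a, w} \<in> E})"
    have "\<exists>g. inj_on g Z \<and> (\<forall>a\<in>Z. g a \<in> Nf a)"
    proof (rule hall)
      show "finite Z" by (rule fZ)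
      show "\<forall>a\<in>Z. finite (Nf a)" using fV by (simp add: Nf_def)
      show "\<forall>S\<subseteq>Z. card S \<le> card (\<Union> (Nf ` S))"
      proof (intro allI impI)
        fix S assume S: "S \<subseteq> Z"
        show "card S \<le> card (\<Union> (Nf ` S))"
        proof (cases "S = {}")
          case True then show ?thesis by simp
        next
          case False
          have iS: "indep E S" using iZ S by (auto simp: indep_def)
          have "\<Union> (Nf ` S) = nbhd V E S"
          proof
            show "\<Union> (Nf ` S) \<subseteq> nbhd V E S"
            proof
              fix w assume "w \<in> \<Union> (Nf ` S)"
              then obtain a where a: "a \<in> S" "w \<in> V" "{a, w} \<in> E" by (auto simp: Nf_def)
              then have "w \<notin> S" using iS unfolding indep_def by blast
              then show "w \<in> nbhd V E S" using a by (auto simp: nbhd_def)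
            qed
            show "nbhd V E S \<subseteq> \<Union> (Nf ` S)" by (auto simp: nbhd_def Nf_def)
          qed
          moreover have "card S < card (nbhd V E S)"
            using surplus_pos[OF G H _ iS False] S ZV by auto
          ultimately show ?thesis by simp
        qed
      qed
    qed
    then obtain g where g: "inj_on g Z" "\<forall>a\<in>Z. g a \<in> Nf a" by blast
    have gNZ: "g a \<in> NZ" if "a \<in> Z" for a
    proof -
      have "g a \<in> V" "{a, g a} \<in> E" using g that by (auto simp: Nf_def)
      moreover have "g a \<notin> Z" using iZ that \<open>{a, g a} \<in> E\<close> unfolding indep_def by blast
      ultimately show ?thesis using NZmem that by blast
    qed
    define MZ where "MZ = (\<lambda>a. {a, g a}) ` Z"
    have injp: "inj_on (\<lambda>a. {a, g a}) Z"
    proof (rule inj_onI)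
      fix a b assume ab: "a \<in> Z" "b \<in> Z" "{a, g a} = {b, g b}"
      have "g b \<notin> Z" using gNZ[OF ab(2)] NZV by auto
      then show "a = b" using ab by (metis doubleton_eq_iff)
    qed
    have cMZ: "card MZ = card Z" unfolding MZ_def using injp by (simp add: card_image)
    have M'V': "\<forall>e\<in>M'. e \<subseteq> V'" using M' E'V' by (auto simp: matching_def)
    have MZout: "\<forall>e\<in>MZ. e \<inter> V' = {}" using gNZ V'd by (auto simp: MZ_def)
    have "M' \<subseteq> E" using M' E'E by (auto simp: matching_def)
    then have fM': "finite M'" using fE by (rule finite_subset)
    have fMZ: "finite MZ" using fZ by (simp add: MZ_def)
    have disj: "M' \<inter> MZ = {}"
    proof (rule ccontr)
      assume "M' \<inter> MZ \<noteq> {}"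
      then obtain e where "e \<in> M'" "e \<in> MZ" by blast
      moreover have "e \<noteq> {}" using \<open>e \<in> MZ\<close> by (auto simp: MZ_def)
      ultimately show False using M'V' MZout by blast
    qed
    have match: "matching E (M' \<union> MZ)"
      unfolding matching_def
    proof (intro conjI ballI impI)
      show "M' \<union> MZ \<subseteq> E"
        using M' E'E g by (auto simp: matching_def MZ_def Nf_def)
    next
      fix e1 e2 assume e: "e1 \<in> M' \<union> MZ" "e2 \<in> M' \<union> MZ" "e1 \<noteq> e2"
      show "e1 \<inter> e2 = {}"
      proof (cases "e1 \<in> M'"; cases "e2 \<in> M'")
        assume "e1 \<in> M'" "e2 \<in> M'" then show ?thesis using M' e unfolding matching_def by blast
      next
        assume "e1 \<in> M'" "e2 \<notin> M'" then show ?thesis using M'V' MZout e by blast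
      next
        assume "e1 \<notin> M'" "e2 \<in> M'" then show ?thesis using M'V' MZout e by blast
      next
        assume "e1 \<notin> M'" "e2 \<notin> M'"
        then obtain a b where ab: "a \<in> Z" "b \<in> Z" "e1 = {a, g a}" "e2 = {b, g b}"
          using e by (auto simp: MZ_def)
        then have "a \<noteq> b" using e by auto
        moreover have "g a \<notin> Z" "g b \<notin> Z" using gNZ ab NZV by auto
        moreover have "g a \<noteq> g b" using g(1) ab \<open>a \<noteq> b\<close> by (meson inj_onD)
        ultimately show ?thesis using ab by auto
      qed
    qed
    have "card (M' \<union> MZ) = card M' + card MZ" using fM' fMZ disj by (rule card_Un_disjoint)
    moreover have "card (M' \<union> MZ) \<le> MM V E" using MM_ge[OF fE match] .
    ultimately show ?thesis using M' cMZ by simp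
  qed
  have "real_of_int k' + real (MM V' E') - 2 * LP V' E'
        \<le> real k - real (card NZ) + real (MM V' E') - real (card V')"
    using k'd LPG' by simp
  also have "\<dots> \<le> real k + real (MM V E) - 2 * LP V E"
    using LPG MMG cV by simp
  finally show ?thesis .
qed

end
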